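(* Let $X=\prod_{i=1}^d X_i$ and let $f,g$, $x^*_\eta$, the probabilities $p_1,\dots,p_d$, the constants $C_f,C_g$, the function $\mathcal L$ and the RB-IRG iterates $\{x_k\}$ be as described in the context. Let $\{\gamma_k\}$ and $\{\eta_k\}$ be positive, non-increasing sequences with $\gamma_0\eta_0<\frac{1}{\mu\, p_{\min}}$. Then for every $k\ge 1$, $$\mathbb E\big[\mathcal L(x_{k+1},x^*_{\eta_k})\,\big|\,\mathcal F_k\big]\le \big(1-\mu\gamma_k\eta_k p_{\min}\big)\mathcal L(x_k,x^*_{\eta_{k-1}})+\frac{2C_g^2}{p_{\min}^2\mu^3\gamma_k\eta_k}\Big(\frac{\eta_{k-1}}{\eta_k}-1\Big)^2+2\gamma_k^2\big(C_f^2+\eta_0^2C_g^2\big).$$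
   Context: $X=\prod_{i=1}^d X_i$ with each $X_i\subseteq\mathbb R^{n_i}$ nonempty, closed and convex, $\sum_i n_i=n$; for $x\in\mathbb R^n$, $x^{(i)}$ denotes its $i$-th block. $f,g:\mathbb R^n\to(-\infty,\infty]$ are proper convex (possibly nondifferentiable) functions, $g$ is $\mu$-strongly convex with $\mu>0$, and $X\subseteq\operatorname{int}(\operatorname{dom} f\cap\operatorname{dom} g)$. For $\eta>0$, $x^*_\eta$ denotes the unique minimizer of $f+\eta g$ over $X$. For $x\in X$, $\tilde\nabla f(x)\in\partial f(x)$ and $\tilde\nabla g(x)\in\partial g(x)$ are the subgradients used by the algorithm, and $\tilde\nabla_i f(x),\tilde\nabla_i g(x)$ their $i$-th blocks; there are constants $C_{f,i},C_{g,i}$ with $\|\tilde\nabla_i f(x)\|\le C_{f,i}$, $\|\tilde\nabla_i g(x)\|\le C_{g,i}$ for all $x\in X$, and $C_f=\sqrt{\sum_i C_{f,i}^2}$, $C_g=\sqrt{\sum_i C_{g,i}^2}$. Probabilities $p_1,\dots,p_d>0$ with $\sum_i p_i=1$; $p_{\min}=\min_i p_i$, $p_{\max}=\max_i p_i$. Algorithm RB-IRG: given $x_0\in X$, positive stepsizes $\gamma_k$, regularization parameters $\eta_k$ and a scalar $r$, set $S_0=\gamma_0^r$, $\bar x_0=x_0$; for $k=0,1,\dots$: draw $i_k\in\{1,\dots,d\}$ i.i.d. with $\mathrm{Prob}(i_k=i)=p_i$; set $x_{k+1}^{(i_k)}=\Pi_{X_{i_k}}\big(x_k^{(i_k)}-\gamma_k(\tilde\nabla_{i_k}f(x_k)+\eta_k\tilde\nabla_{i_k}g(x_k))\big)$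 (Euclidean projection) and $x_{k+1}^{(i)}=x_k^{(i)}$ for $i\ne i_k$; set $S_{k+1}=S_k+\gamma_{k+1}^r$, $\bar x_{k+1}=(S_k\bar x_k+\gamma_{k+1}^r x_{k+1})/S_{k+1}$. $\mathcal F_k$ denotes the information $\{i_0,\dots,i_{k-1}\}$ (conditioning is on the $\sigma$-algebra they generate). For $x,y\in\mathbb R^n$, $\mathcal L(x,y)=\sum_{i=1}^d p_i^{-1}\|x^{(i)}-y^{(i)}\|^2$. *)

theory Defs
  imports "HOL-Analysis.Analysis" "HOL-Probability.Probability"
begin

text \<open>Coordinates of R^n are indexed by a finite type 'c; the block structure is a map
  blk from coordinates to block indices 'b (the d blocks). The i-th block x^(i) of x is
  represented inside R^n by zeroing all coordinates outside block i.\<close>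

definition blockp :: "('c \<Rightarrow> 'b) \<Rightarrow> 'b \<Rightarrow> real^'c \<Rightarrow> real^'c" where
  "blockp blk i x = (\<chi> c. if blk c = i then x $ c else 0)"

text \<open>The product set X = X_1 x ... x X_d, each X_i a set of vectors supported on block i.\<close>
definition prodset :: "('c \<Rightarrow> 'b) \<Rightarrow> ('b \<Rightarrow> (real^'c) set) \<Rightarrow> (real^'c) set" where
  "prodset blk Xs = {x. \<forall>i. blockp blk i x \<in> Xs i}"

definition edom :: "('a \<Rightarrow> ereal) \<Rightarrow> 'a set" where
  "edom f = {x. f x < \<infinity>}"

definition proper_fun :: "('a \<Rightarrow> ereal) \<Rightarrow> bool" where
  "proper_fun f \<longleftrightarrow> (\<forall>x. f x \<noteq> -\<infinity>) \<and> edom f \<noteq> {}"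

definition econvex :: "('a::real_vector \<Rightarrow> ereal) \<Rightarrow> bool" where
  "econvex f \<longleftrightarrow> convex (edom f) \<and> convex_on (edom f) (\<lambda>x. real_of_ereal (f x))"

definition estrongly_convex :: "real \<Rightarrow> ('a::real_normed_vector \<Rightarrow> ereal) \<Rightarrow> bool" where
  "estrongly_convex \<mu> g \<longleftrightarrow> convex (edom g) \<and>
     convex_on (edom g) (\<lambda>x. real_of_ereal (g x) - \<mu> / 2 * (norm x)\<^sup>2)"

definition subdiff :: "('a::real_inner \<Rightarrow> ereal) \<Rightarrow> 'a \<Rightarrow> 'a set" where
  "subdiff f x = {s. \<forall>y. ereal (real_of_ereal (f x) + inner s (y - x)) \<le> f y}"

definition regmin :: "('a \<Rightarrow> ereal) \<Rightarrow> ('a \<Rightarrow> ereal) \<Rightarrow> 'a set \<Rightarrow> real \<Rightarrow> 'a" where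
  "regmin f g X eta = (THE z. z \<in> X \<and> (\<forall>y\<in>X. f z + ereal eta * g z \<le> f y + ereal eta * g y))"

definition Lfun :: "('c \<Rightarrow> 'b::finite) \<Rightarrow> ('b \<Rightarrow> real) \<Rightarrow> real^'c \<Rightarrow> real^'c \<Rightarrow> real" where
  "Lfun blk p x y = (\<Sum>i\<in>UNIV. (1 / p i) * (norm (blockp blk i (x - y)))\<^sup>2)"

definition rb_step :: "('c \<Rightarrow> 'b) \<Rightarrow> ('b \<Rightarrow> (real^'c) set) \<Rightarrow> (real^'c \<Rightarrow> real^'c) \<Rightarrow>
    (real^'c \<Rightarrow> real^'c) \<Rightarrow> real \<Rightarrow> real \<Rightarrow> 'b \<Rightarrow> real^'c \<Rightarrow> real^'c" where
  "rb_step blk Xs gf gg gam eta i x =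
     x - blockp blk i x
       + closest_point (Xs i) (blockp blk i (x - gam *\<^sub>R (gf x + eta *\<^sub>R gg x)))"

text \<open>The iterates x_k as functions of the sequence of sampled indices omega = (i_0, i_1, ...).\<close>
primrec rb_iter :: "('c \<Rightarrow> 'b) \<Rightarrow> ('b \<Rightarrow> (real^'c) set) \<Rightarrow> (real^'c \<Rightarrow> real^'c) \<Rightarrow>
    (real^'c \<Rightarrow> real^'c) \<Rightarrow> (nat \<Rightarrow> real) \<Rightarrow> (nat \<Rightarrow> real) \<Rightarrow> real^'c \<Rightarrow> (nat \<Rightarrow> 'b) \<Rightarrow> nat \<Rightarrow> real^'c" where
  "rb_iter blk Xs gf gg gam eta x0 \<omega> 0 = x0"
| "rb_iter blk Xs gf gg gam eta x0 \<omega> (Suc k) =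
     rb_step blk Xs gf gg (gam k) (eta k) (\<omega> k) (rb_iter blk Xs gf gg gam eta x0 \<omega> k)"

text \<open>Probability space of i.i.d. index sequences with law P, and the filtration
  F_k = sigma(i_0, ..., i_{k-1}).\<close>
definition idx_space :: "'b pmf \<Rightarrow> (nat \<Rightarrow> 'b) measure" where
  "idx_space P = PiM UNIV (\<lambda>_. measure_pmf P)"

definition idx_filt :: "'b pmf \<Rightarrow> nat \<Rightarrow> (nat \<Rightarrow> 'b) measure" where
  "idx_filt P k = vimage_algebra (space (idx_space P)) (\<lambda>\<omega>. restrict \<omega> {..<k})
                     (PiM {..<k} (\<lambda>_. measure_pmf P))"

end

theory Submission
  imports Defs
begin


lemma disc_sets:
  fixes P :: "'b::finite pmf"
  assumes "finite J"
  shows "sets (PiM J (\<lambda>_. measure_pmf P)) = Pow (space (PiM J (\<lambda>_. measure_pmf P)))"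
proof
  show "sets (PiM J (\<lambda>_. measure_pmf P)) \<subseteq> Pow (space (PiM J (\<lambda>_. measure_pmf P)))"
    using sets.sets_into_space by blast
next
  let ?S = "space (PiM J (\<lambda>_. measure_pmf P))"
  show "Pow ?S \<subseteq> sets (PiM J (\<lambda>_. measure_pmf P))"
  proof
    fix A assume A: "A \<in> Pow ?S"
    have fin: "finite ?S" using assms by (simp add: space_PiM finite_PiE)
    have "A = (\<Union>w\<in>A. PiE J (\<lambda>j. {w j}))"
    proof (rule set_eqI, rule iffI)
      fix y assume "y \<in> A"
      then have "y \<in> PiE J (\<lambda>j. {y j})" using A by (auto simp: space_PiM PiE_def)
      then show "y \<in> (\<Union>w\<in>A. PiE J (\<lambda>j. {w j}))" using \<open>y \<in> A\<close> by blast
    next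
      fix y assume "y \<in> (\<Union>w\<in>A. PiE J (\<lambda>j. {w j}))"
      then obtain w where w: "w \<in> A" "y \<in> PiE J (\<lambda>j. {w j})" by blast
      have "w \<in> PiE J (\<lambda>_. UNIV)" using A w(1) by (auto simp: space_PiM)
      then have "y = w" using w(2) by (auto simp: PiE_def extensional_def fun_eq_iff)
      then show "y \<in> A" using w by simp
    qed
    also have "\<dots> \<in> sets (PiM J (\<lambda>_. measure_pmf P))"
      using fin A assms by (intro sets.finite_UN) (auto intro!: sets_PiM_I_finite dest: finite_subset)
    finally show "A \<in> sets (PiM J (\<lambda>_. measure_pmf P))" .
  qed
qed

lemma disc_meas:
  fixes P :: "'b::finite pmf"
  assumes "finite J"
  shows "F \<in> measurable (PiM J (\<lambda>_. measure_pmf P)) (N::'z measure) \<longleftrightarrow> F \<in> space (PiM J (\<lambda>_. measure_pmf P)) \<rightarrow> space N"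
proof -
  have "measurable (PiM J (\<lambda>_. measure_pmf P)) N = measurable (count_space (space (PiM J (\<lambda>_. measure_pmf P)))) N"
    by (rule measurable_cong_sets) (simp_all add: disc_sets[OF assms])
  then show ?thesis by simp
qed

lemma pps: "product_prob_space (\<lambda>_. measure_pmf P)"
  by unfold_locales

lemma fin_integrable:
  fixes P :: "'b::finite pmf" and F :: "(nat \<Rightarrow> 'b) \<Rightarrow> real"
  assumes "finite J"
  shows "integrable (PiM J (\<lambda>_. measure_pmf P)) F"
proof -
  interpret PP: product_prob_space "\<lambda>_. measure_pmf P" UNIV by (rule pps)
  interpret FP: prob_space "PiM J (\<lambda>_. measure_pmf P)"
    using assms by (intro prob_space_PiM) (simp add: prob_space_measure_pmf)
  let ?S = "space (PiM J (\<lambda>_. measure_pmf P))"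
  have fin: "finite ?S" using assms by (simp add: space_PiM finite_PiE)
  show ?thesis
  proof (rule FP.integrable_const_bound[where B="Max ((\<lambda>w. norm (F w)) ` ?S)"])
    show "AE x in PiM J (\<lambda>_. measure_pmf P). norm (F x) \<le> Max ((\<lambda>w. norm (F w)) ` ?S)"
      using fin by (intro AE_I2) simp
    show "F \<in> borel_measurable (PiM J (\<lambda>_. measure_pmf P))"
      by (rule disc_meas[OF assms, THEN iffD2]) simp
  qed
qed

lemma fin_fun:
  fixes P :: "'b::finite pmf" and F :: "(nat \<Rightarrow> 'b) \<Rightarrow> real"
  assumes "finite J"
  shows "(\<lambda>\<omega>. F (restrict \<omega> J)) \<in> borel_measurable (idx_space P)"
    and "integrable (idx_space P) (\<lambda>\<omega>. F (restrict \<omega> J))"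
    and "integral\<^sup>L (idx_space P) (\<lambda>\<omega>. F (restrict \<omega> J)) = integral\<^sup>L (PiM J (\<lambda>_. measure_pmf P)) F"
proof -
  interpret PP: product_prob_space "\<lambda>_. measure_pmf P" UNIV by (rule pps)
  have r: "(\<lambda>\<omega>. restrict \<omega> J) \<in> measurable (idx_space P) (PiM J (\<lambda>_. measure_pmf P))"
    unfolding idx_space_def by (rule measurable_restrict_subset) simp
  have Fm: "F \<in> borel_measurable (PiM J (\<lambda>_. measure_pmf P))"
    by (rule disc_meas[OF assms, THEN iffD2]) simp
  have d: "distr (idx_space P) (PiM J (\<lambda>_. measure_pmf P)) (\<lambda>\<omega>. restrict \<omega> J) = PiM J (\<lambda>_. measure_pmf P)"
    unfolding idx_space_def using assms by (intro PP.distr_PiM_restrict_finite) auto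
  show "(\<lambda>\<omega>. F (restrict \<omega> J)) \<in> borel_measurable (idx_space P)"
    using measurable_comp[OF r Fm] by (simp add: comp_def)
  show "integrable (idx_space P) (\<lambda>\<omega>. F (restrict \<omega> J))"
    using integrable_distr_eq[OF r Fm] d fin_integrable[OF assms, of P F] by simp
  show "integral\<^sup>L (idx_space P) (\<lambda>\<omega>. F (restrict \<omega> J)) = integral\<^sup>L (PiM J (\<lambda>_. measure_pmf P)) F"
    using integral_distr[OF r Fm] d by simp
qed

lemma space_idx[simp]: "space (idx_space P) = UNIV"
  by (simp add: idx_space_def space_PiM)

lemma idx_prob: "prob_space (idx_space P)"
  unfolding idx_space_def by (intro prob_space_PiM) (simp add: prob_space_measure_pmf)

lemma restr_meas: "(\<lambda>\<omega>. restrict \<omega> J) \<in> measurable (idx_space P) (PiM J (\<lambda>_. measure_pmf P))"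
  unfolding idx_space_def by (rule measurable_restrict_subset) simp

lemma restr_space: "(\<lambda>\<omega>. restrict \<omega> J) \<in> UNIV \<rightarrow> space (PiM J (\<lambda>_. measure_pmf P))"
  by (simp add: space_PiM)

lemma filt_sets: "sets (idx_filt P k) = {(\<lambda>\<omega>. restrict \<omega> {..<k}) -` A | A. A \<in> sets (PiM {..<k} (\<lambda>_. measure_pmf P))}"
  unfolding idx_filt_def using restr_space[of "{..<k}" P] by (subst sets_vimage_algebra2) auto

lemma filt_subalg: "subalgebra (idx_space P) (idx_filt P k)"
  unfolding subalgebra_def
proof
  show "space (idx_filt P k) = space (idx_space P)" by (simp add: idx_filt_def)
  show "sets (idx_filt P k) \<subseteq> sets (idx_space P)"
  proof
    fix A assume "A \<in> sets (idx_filt P k)"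
    then obtain B where B: "B \<in> sets (PiM {..<k} (\<lambda>_. measure_pmf P))" "A = (\<lambda>\<omega>. restrict \<omega> {..<k}) -` B"
      by (auto simp: filt_sets)
    have "(\<lambda>\<omega>. restrict \<omega> {..<k}) -` B \<inter> space (idx_space P) \<in> sets (idx_space P)"
      using measurable_sets[OF restr_meas B(1)] .
    then show "A \<in> sets (idx_space P)" using B by simp
  qed
qed

lemma filt_sfs: "sigma_finite_subalgebra (idx_space P) (idx_filt P k)"
proof -
  interpret prob_space "idx_space P" by (rule idx_prob)
  interpret finite_measure_subalgebra "idx_space P" "idx_filt P k"
    by unfold_locales (rule filt_subalg)
  show ?thesis by (rule sigma_finite_subalgebra_axioms)
qed

lemma cond_exp_step:
  fixes P :: "'b::finite pmf" and W :: "(nat \<Rightarrow> 'b) \<Rightarrow> real"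
  assumes dep: "\<And>\<omega> \<omega>'. (\<And>j. j < Suc k \<Longrightarrow> \<omega> j = \<omega>' j) \<Longrightarrow> W \<omega> = W \<omega>'"
  shows "AE \<omega> in idx_space P. real_cond_exp (idx_space P) (idx_filt P k) W \<omega> = (\<Sum>i\<in>UNIV. pmf P i * W (fun_upd \<omega> k i))"
proof -
  interpret S: sigma_finite_subalgebra "idx_space P" "idx_filt P k" by (rule filt_sfs)
  interpret PP: product_prob_space "\<lambda>_. measure_pmf P" UNIV by (rule pps)
  define H where "H = (\<lambda>\<omega>. \<Sum>i\<in>UNIV. pmf P i * W (fun_upd \<omega> k i))"
  have WR: "W \<omega> = W (restrict \<omega> {..<Suc k})" for \<omega> by (rule dep) simp
  have WR': "W \<omega> = W (restrict \<omega> (insert k {..<k}))" for \<omega> by (rule dep) auto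
  have HR: "H \<omega> = H (restrict \<omega> {..<k})" for \<omega>
    unfolding H_def by (intro sum.cong refl arg_cong2[where f="(*)"] dep) auto
  have Wi: "integrable (idx_space P) W"
    using fin_fun(2)[where J="{..<Suc k}" and F=W and P=P] WR by simp
  have Hi: "integrable (idx_space P) H"
    using fin_fun(2)[where J="{..<k}" and F=H and P=P] HR by simp
  have Hm: "H \<in> borel_measurable (idx_filt P k)"
  proof -
    have "(\<lambda>\<omega>. restrict \<omega> {..<k}) \<in> measurable (idx_filt P k) (PiM {..<k} (\<lambda>_. measure_pmf P))"
      unfolding idx_filt_def by (rule measurable_vimage_algebra1) (simp add: space_PiM)
    moreover have "H \<in> borel_measurable (PiM {..<k} (\<lambda>_. measure_pmf P))"
      by (rule disc_meas[THEN iffD2]) simp_all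
    ultimately have "(\<lambda>\<omega>. H (restrict \<omega> {..<k})) \<in> borel_measurable (idx_filt P k)"
      using measurable_comp by (fastforce simp: comp_def)
    then show ?thesis using HR by simp
  qed
  have "AE \<omega> in idx_space P. real_cond_exp (idx_space P) (idx_filt P k) W \<omega> = H \<omega>"
  proof (rule S.real_cond_exp_charact[OF _ Wi Hi Hm])
    fix A assume "A \<in> sets (idx_filt P k)"
    then obtain B where B: "B \<in> sets (PiM {..<k} (\<lambda>_. measure_pmf P))" "A = (\<lambda>\<omega>. restrict \<omega> {..<k}) -` B"
      by (auto simp: filt_sets)
    have indA: "indicator A \<omega> = (indicator B (restrict \<omega> {..<k}) :: real)" for \<omega>
      using B(2) by (simp add: indicator_def)
    define G where "G = (\<lambda>\<omega>'. indicator B (restrict \<omega>' {..<k}) * W \<omega>')"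
    have "(\<integral>\<omega>\<in>A. W \<omega> \<partial>idx_space P) = (\<integral>\<omega>. G (restrict \<omega> {..<Suc k}) \<partial>idx_space P)"
      unfolding set_lebesgue_integral_def G_def
      by (intro Bochner_Integration.integral_cong refl) (simp add: indA WR'[symmetric] lessThan_Suc)
    also have "\<dots> = integral\<^sup>L (PiM (insert k {..<k}) (\<lambda>_. measure_pmf P)) G"
      using fin_fun(3)[where J="{..<Suc k}" and F=G and P=P] by (simp add: lessThan_Suc)
    also have "\<dots> = (\<integral>x. (\<integral>y. G (x(k:=y)) \<partial>measure_pmf P) \<partial>PiM {..<k} (\<lambda>_. measure_pmf P))"
      by (rule PP.product_integral_insert) (simp_all add: fin_integrable)
    also have "\<dots> = (\<integral>x. indicator B x * H x \<partial>PiM {..<k} (\<lambda>_. measure_pmf P))"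
    proof (intro Bochner_Integration.integral_cong refl)
      fix x assume x: "x \<in> space (PiM {..<k} (\<lambda>_. measure_pmf P))"
      then have rx: "restrict (x(k := y)) {..<k} = x" for y
        by (auto simp: space_PiM PiE_def extensional_def fun_eq_iff)
      have "(\<integral>y. G (x(k:=y)) \<partial>measure_pmf P) = (\<Sum>i\<in>UNIV. pmf P i *\<^sub>R G (x(k:=i)))"
        by (rule integral_measure_pmf) simp_all
      also have "\<dots> = indicator B x * H x"
        unfolding G_def H_def rx by (simp add: sum_distrib_left mult_ac)
      finally show "(\<integral>y. G (x(k:=y)) \<partial>measure_pmf P) = indicator B x * H x" .
    qed
    also have "\<dots> = (\<integral>\<omega>. indicator B (restrict \<omega> {..<k}) * H (restrict \<omega> {..<k}) \<partial>idx_space P)"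
      using fin_fun(3)[where J="{..<k}" and F="\<lambda>x. indicator B x * H x" and P=P] by simp
    also have "\<dots> = (\<integral>\<omega>\<in>A. H \<omega> \<partial>idx_space P)"
      unfolding set_lebesgue_integral_def
      by (intro Bochner_Integration.integral_cong refl) (simp add: indA HR[symmetric])
    finally show "(\<integral>\<omega>\<in>A. W \<omega> \<partial>idx_space P) = (\<integral>\<omega>\<in>A. H \<omega> \<partial>idx_space P)" .
  qed
  then show ?thesis unfolding H_def .
qed




lemma blockp_comp: "blockp blk i x $ c = (if blk c = i then x $ c else 0)"
  by (simp add: blockp_def)

lemma blockp_add: "blockp blk i (x + y) = blockp blk i x + blockp blk i y"
  by (simp add: vec_eq_iff blockp_comp)
lemma blockp_diff: "blockp blk i (x - y) = blockp blk i x - blockp blk i y"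
  by (simp add: vec_eq_iff blockp_comp)
lemma blockp_scale: "blockp blk i (a *\<^sub>R x) = a *\<^sub>R blockp blk i x"
  by (simp add: vec_eq_iff blockp_comp)
lemma blockp_idem: "blockp blk i (blockp blk i x) = blockp blk i x"
  by (simp add: vec_eq_iff blockp_comp)
lemma blockp_other: "i \<noteq> j \<Longrightarrow> blockp blk j (blockp blk i x) = 0"
  by (simp add: vec_eq_iff blockp_comp)

lemma linear_blockp: "linear (blockp blk i)"
  by (rule linearI) (simp_all add: blockp_add blockp_scale)

lemma norm_sq_vec: "(norm (x::real^'c::finite))\<^sup>2 = (\<Sum>c\<in>UNIV. (x $ c)\<^sup>2)"
  by (simp add: norm_vec_def L2_set_def sum_nonneg)

lemma norm_blocks:
  fixes blk :: "'c::finite \<Rightarrow> 'b::finite"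
  shows "(norm x)\<^sup>2 = (\<Sum>i\<in>UNIV. (norm (blockp blk i x))\<^sup>2)"
proof -
  have "(\<Sum>i\<in>UNIV. (norm (blockp blk i x))\<^sup>2) = (\<Sum>i\<in>UNIV. \<Sum>c\<in>UNIV. if blk c = i then (x $ c)\<^sup>2 else 0)"
    by (intro sum.cong refl) (auto simp: norm_sq_vec blockp_comp intro!: sum.cong)
  also have "\<dots> = (\<Sum>c\<in>UNIV. \<Sum>i\<in>UNIV. if blk c = i then (x $ c)\<^sup>2 else 0)"
    by (rule sum.swap)
  also have "\<dots> = (\<Sum>c\<in>UNIV. (x $ c)\<^sup>2)"
    by (simp add: sum.delta)
  finally show ?thesis by (simp add: norm_sq_vec)
qed

lemma lim_le:
  fixes a b c :: real
  assumes "\<And>t. 0 < t \<Longrightarrow> t < 1 \<Longrightarrow> b - t * c \<le> a"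
  shows "b \<le> a"
proof (rule ccontr)
  assume "\<not> b \<le> a"
  define t where "t = min (1/2) ((b - a) / (2 * (\<bar>c\<bar> + 1)))"
  have t0: "0 < t" using \<open>\<not> b \<le> a\<close> unfolding t_def by (simp add: divide_pos_pos)
  have t1: "t < 1" unfolding t_def by simp
  have "t * c \<le> t * (\<bar>c\<bar> + 1)" using t0 by (intro mult_left_mono) auto
  also have "\<dots> \<le> (b - a) / (2 * (\<bar>c\<bar> + 1)) * (\<bar>c\<bar> + 1)"
    by (intro mult_right_mono) (auto simp: t_def)
  also have "\<dots> = (b - a) / 2" by (simp add: field_simps)
  finally have "t * c \<le> (b - a) / 2" .
  moreover have "b - t * c \<le> a" by (rule assms[OF t0 t1])
  ultimately show False using \<open>\<not> b \<le> a\<close> by argo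
qed

lemma norm_combo:
  fixes x y :: "'a::real_inner"
  shows "(norm ((1 - t) *\<^sub>R x + t *\<^sub>R y))\<^sup>2 = (1 - t) * (norm x)\<^sup>2 + t * (norm y)\<^sup>2 - t * (1 - t) * (norm (y - x))\<^sup>2"
  by (simp add: power2_norm_eq_inner inner_add_left inner_add_right inner_diff_left inner_diff_right inner_commute algebra_simps)

lemma sc_ineq:
  fixes \<phi> :: "'a::real_inner \<Rightarrow> real"
  assumes cv: "convex_on S (\<lambda>x. \<phi> x - m / 2 * (norm x)\<^sup>2)" and x: "x \<in> S" and y: "y \<in> S"
    and t: "0 \<le> t" "t \<le> 1"
  shows "\<phi> ((1 - t) *\<^sub>R x + t *\<^sub>R y) \<le> (1 - t) * \<phi> x + t * \<phi> y - m / 2 * t * (1 - t) * (norm (y - x))\<^sup>2"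
proof -
  define w where "w = (1 - t) *\<^sub>R x + t *\<^sub>R y"
  have nw: "(norm w)\<^sup>2 = (1 - t) * (norm x)\<^sup>2 + t * (norm y)\<^sup>2 - t * (1 - t) * (norm (y - x))\<^sup>2"
    unfolding w_def by (rule norm_combo)
  have h: "\<phi> w - m / 2 * (norm w)\<^sup>2 \<le> (1 - t) * (\<phi> x - m / 2 * (norm x)\<^sup>2) + t * (\<phi> y - m / 2 * (norm y)\<^sup>2)"
    using convex_onD[OF cv t(1) t(2) x y] unfolding w_def .
  have "\<phi> w \<le> (1 - t) * (\<phi> x - m / 2 * (norm x)\<^sup>2) + t * (\<phi> y - m / 2 * (norm y)\<^sup>2)
       + m / 2 * ((1 - t) * (norm x)\<^sup>2 + t * (norm y)\<^sup>2 - t * (1 - t) * (norm (y - x))\<^sup>2)"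
    using h unfolding nw by linarith
  also have "\<dots> = (1 - t) * \<phi> x + t * \<phi> y - m / 2 * t * (1 - t) * (norm (y - x))\<^sup>2"
    by (simp add: field_simps)
  finally show ?thesis unfolding w_def .
qed

lemma min_growth:
  fixes \<phi> :: "'a::real_inner \<Rightarrow> real"
  assumes cv: "convex_on S (\<lambda>x. \<phi> x - m / 2 * (norm x)\<^sup>2)" and z: "z \<in> S" and x: "x \<in> S"
    and zmin: "\<And>y. y \<in> S \<Longrightarrow> \<phi> z \<le> \<phi> y"
  shows "m / 2 * (norm (x - z))\<^sup>2 \<le> \<phi> x - \<phi> z"
proof (rule lim_le)
  fix t :: real assume t: "0 < t" "t < 1"
  define D where "D = (norm (x - z))\<^sup>2"
  have S: "convex S" using cv by (simp add: convex_on_def)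
  have w: "(1 - t) *\<^sub>R z + t *\<^sub>R x \<in> S" using convexD[OF S z x, of "1 - t" t] t by simp
  have "\<phi> z \<le> (1 - t) * \<phi> z + t * \<phi> x - m / 2 * t * (1 - t) * D"
    using zmin[OF w] sc_ineq[OF cv z x, of t] t unfolding D_def by simp
  moreover have "t * (m / 2 * D - t * (m / 2 * D)) = m / 2 * t * (1 - t) * D"
    by (simp add: field_simps)
  moreover have "t * (\<phi> x - \<phi> z) = t * \<phi> x - t * \<phi> z" "(1 - t) * \<phi> z = \<phi> z - t * \<phi> z"
    by (simp_all add: algebra_simps)
  ultimately have "t * (m / 2 * D - t * (m / 2 * D)) \<le> t * (\<phi> x - \<phi> z)"
    by linarith
  then show "m / 2 * (norm (x - z))\<^sup>2 - t * (m / 2 * (norm (x - z))\<^sup>2) \<le> \<phi> x - \<phi> z"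
    using t unfolding D_def by simp
qed

lemma sc_subgrad:
  fixes \<phi> :: "'a::real_inner \<Rightarrow> real"
  assumes cv: "convex_on S (\<lambda>x. \<phi> x - m / 2 * (norm x)\<^sup>2)" and x: "x \<in> S" and y: "y \<in> S"
    and sg: "\<And>w. w \<in> S \<Longrightarrow> \<phi> x + inner s (w - x) \<le> \<phi> w"
  shows "\<phi> x + inner s (y - x) + m / 2 * (norm (y - x))\<^sup>2 \<le> \<phi> y"
proof -
  have "inner s (y - x) + m / 2 * (norm (y - x))\<^sup>2 \<le> \<phi> y - \<phi> x"
  proof (rule lim_le)
    fix t :: real assume t: "0 < t" "t < 1"
    define D where "D = (norm (y - x))\<^sup>2"
    have S: "convex S" using cv by (simp add: convex_on_def)
    have w: "(1 - t) *\<^sub>R x + t *\<^sub>R y \<in> S" using convexD[OF S x y, of "1 - t" t] t by simp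
    have e: "(1 - t) *\<^sub>R x + t *\<^sub>R y - x = t *\<^sub>R (y - x)" by (simp add: algebra_simps)
    have "\<phi> x + t * inner s (y - x) \<le> (1 - t) * \<phi> x + t * \<phi> y - m / 2 * t * (1 - t) * D"
      using sg[OF w] sc_ineq[OF cv x y, of t] t unfolding e D_def by simp
    moreover have "t * (inner s (y - x) + m / 2 * D - t * (m / 2 * D)) = t * inner s (y - x) + m / 2 * t * (1 - t) * D"
      by (simp add: field_simps)
    moreover have "t * (\<phi> y - \<phi> x) = t * \<phi> y - t * \<phi> x" "(1 - t) * \<phi> x = \<phi> x - t * \<phi> x"
      by (simp_all add: algebra_simps)
    ultimately have "t * (inner s (y - x) + m / 2 * D - t * (m / 2 * D)) \<le> t * (\<phi> y - \<phi> x)"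
      by linarith
    then show "inner s (y - x) + m / 2 * (norm (y - x))\<^sup>2 - t * (m / 2 * (norm (y - x))\<^sup>2) \<le> \<phi> y - \<phi> x"
      using t unfolding D_def by simp
  qed
  then show ?thesis by simp
qed


lemma young:
  fixes a b :: "'a::real_inner" and c :: real
  assumes c: "c > 0"
  shows "(norm (a + b))\<^sup>2 \<le> (1 + c) * (norm a)\<^sup>2 + (1 + 1 / c) * (norm b)\<^sup>2"
proof -
  have e: "(norm (a + b))\<^sup>2 = (norm a)\<^sup>2 + 2 * inner a b + (norm b)\<^sup>2"
    by (simp add: power2_norm_eq_inner inner_add_left inner_add_right inner_commute)
  have cs: "inner a b \<le> norm a * norm b" by (rule norm_cauchy_schwarz)
  have "0 \<le> (c * norm a - norm b)\<^sup>2 / c" using c by simp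
  also have "(c * norm a - norm b)\<^sup>2 / c = c * (norm a)\<^sup>2 - 2 * (norm a * norm b) + (norm b)\<^sup>2 / c"
    using c by (simp add: power2_eq_square field_simps)
  finally have "2 * (norm a * norm b) \<le> c * (norm a)\<^sup>2 + (norm b)\<^sup>2 / c" by linarith
  then show ?thesis using e cs by (simp add: algebra_simps)
qed

lemma Lfun_nonneg: assumes "\<And>i. p i > 0" shows "0 \<le> Lfun blk p x y"
  unfolding Lfun_def using assms by (intro sum_nonneg) (simp add: less_imp_le)

lemma Lfun_lower:
  fixes blk :: "'c::finite \<Rightarrow> 'b::finite"
  assumes pp: "\<And>i. p i > 0" and pm: "\<And>i. pmin \<le> p i" and p0: "pmin > 0"
  shows "pmin * Lfun blk p x y \<le> (norm (x - y))\<^sup>2"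
proof -
  have "pmin * Lfun blk p x y = (\<Sum>i\<in>UNIV. (pmin / p i) * (norm (blockp blk i (x - y)))\<^sup>2)"
    unfolding Lfun_def by (simp add: sum_distrib_left)
  also have "\<dots> \<le> (\<Sum>i\<in>UNIV. (norm (blockp blk i (x - y)))\<^sup>2)"
  proof (rule sum_mono)
    fix i
    have h1: "pmin / p i \<le> 1" using pm[of i] pp[of i] by simp
    have h0: "0 \<le> pmin / p i" using p0 pp[of i] by simp
    show "pmin / p i * (norm (blockp blk i (x - y)))\<^sup>2 \<le> (norm (blockp blk i (x - y)))\<^sup>2"
      using mult_left_le_one_le[OF zero_le_power2 h0 h1] .
  qed
  also have "\<dots> = (norm (x - y))\<^sup>2" by (simp add: norm_blocks[symmetric])
  finally show ?thesis .
qed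

lemma Lfun_tri:
  fixes blk :: "'c::finite \<Rightarrow> 'b::finite"
  assumes pp: "\<And>i. p i > 0" and c: "c > 0"
  shows "Lfun blk p x z \<le> (1 + c) * Lfun blk p x z' + (1 + 1 / c) * Lfun blk p z' z"
proof -
  have "Lfun blk p x z \<le> (\<Sum>i\<in>UNIV. (1 / p i) * ((1 + c) * (norm (blockp blk i (x - z')))\<^sup>2
                            + (1 + 1 / c) * (norm (blockp blk i (z' - z)))\<^sup>2))"
    unfolding Lfun_def
  proof (rule sum_mono)
    fix i
    have "blockp blk i (x - z) = blockp blk i (x - z') + blockp blk i (z' - z)"
      by (simp add: blockp_add[symmetric])
    then have "(norm (blockp blk i (x - z)))\<^sup>2 \<le> (1 + c) * (norm (blockp blk i (x - z')))\<^sup>2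
                            + (1 + 1 / c) * (norm (blockp blk i (z' - z)))\<^sup>2"
      using young[OF c] by simp
    then show "1 / p i * (norm (blockp blk i (x - z)))\<^sup>2 \<le> 1 / p i * ((1 + c) * (norm (blockp blk i (x - z')))\<^sup>2
                            + (1 + 1 / c) * (norm (blockp blk i (z' - z)))\<^sup>2)"
      using pp[of i] by (intro mult_left_mono) auto
  qed
  also have "\<dots> = (\<Sum>i\<in>UNIV. (1 + c) * ((1 / p i) * (norm (blockp blk i (x - z')))\<^sup>2)
                            + (1 + 1 / c) * ((1 / p i) * (norm (blockp blk i (z' - z)))\<^sup>2))"
    by (intro sum.cong refl) (simp add: algebra_simps add_divide_distrib)
  also have "\<dots> = (1 + c) * Lfun blk p x z' + (1 + 1 / c) * Lfun blk p z' z"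
    unfolding Lfun_def by (simp only: sum.distrib sum_distrib_left)
  finally show ?thesis .
qed

locale rbs =
  fixes blk :: "'c::finite \<Rightarrow> 'b::finite"
    and Xs :: "'b \<Rightarrow> (real^'c) set"
    and f g :: "real^'c \<Rightarrow> ereal"
    and gf gg :: "real^'c \<Rightarrow> real^'c"
    and \<mu> :: real
    and x0 :: "real^'c"
  assumes Xs_block: "\<And>i. Xs i \<subseteq> {y. blockp blk i y = y}"
    and Xs_ne: "\<And>i. Xs i \<noteq> {}"
    and Xs_closed: "\<And>i. closed (Xs i)"
    and Xs_convex: "\<And>i. convex (Xs i)"
    and f_proper: "proper_fun f" and f_convex: "econvex f"
    and g_proper: "proper_fun g"
    and mu_pos: "\<mu> > 0" and g_strong: "estrongly_convex \<mu> g"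
    and X_int: "prodset blk Xs \<subseteq> interior (edom f \<inter> edom g)"
    and gf_sub: "\<And>y. y \<in> prodset blk Xs \<Longrightarrow> gf y \<in> subdiff f y"
    and gg_sub: "\<And>y. y \<in> prodset blk Xs \<Longrightarrow> gg y \<in> subdiff g y"
    and x0_in: "x0 \<in> prodset blk Xs"
begin

abbreviation "X \<equiv> prodset blk Xs"
definition "fr y = real_of_ereal (f y)"
definition "gr y = real_of_ereal (g y)"
definition "FF \<eta> y = fr y + \<eta> * gr y"

lemma X_convex: "convex X"
proof (rule convexI)
  fix x y :: "real^'c" and u v :: real
  assume "x \<in> X" "y \<in> X" "0 \<le> u" "0 \<le> v" "u + v = 1"
  then show "u *\<^sub>R x + v *\<^sub>R y \<in> X"
    using convexD[OF Xs_convex] by (simp add: prodset_def blockp_add blockp_scale)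
qed

lemma X_closed: "closed X"
  unfolding prodset_def
proof (rule closed_Collect_all)
  fix i
  have "closed (blockp blk i -` Xs i)"
    by (rule continuous_closed_vimage[OF Xs_closed]) (intro linear_continuous_at linear_conv_bounded_linear[THEN iffD1] linear_blockp)
  then show "closed {x. blockp blk i x \<in> Xs i}" by (simp add: vimage_def)
qed

lemma X_f: "X \<subseteq> edom f" and X_g: "X \<subseteq> edom g"
  using X_int interior_subset by blast+

lemma f_fin: "y \<in> X \<Longrightarrow> f y = ereal (fr y)"
  using X_f f_proper unfolding fr_def edom_def proper_fun_def
  by (intro ereal_real'[symmetric]) auto

lemma g_fin: "y \<in> X \<Longrightarrow> g y = ereal (gr y)"
  using X_g g_proper unfolding gr_def edom_def proper_fun_def
  by (intro ereal_real'[symmetric]) auto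

lemma fr_conv: "convex_on X fr"
  using f_convex X_f X_convex unfolding econvex_def fr_def by (blast intro: convex_on_subset)

lemma gr_sc: "convex_on X (\<lambda>x. gr x - \<mu> / 2 * (norm x)\<^sup>2)"
  using g_strong X_g X_convex unfolding estrongly_convex_def gr_def by (blast intro: convex_on_subset)

lemma FF_sc: assumes "\<eta> \<ge> 0" shows "convex_on X (\<lambda>x. FF \<eta> x - \<eta> * \<mu> / 2 * (norm x)\<^sup>2)"
proof -
  have "convex_on X (\<lambda>x. fr x + \<eta> * (gr x - \<mu> / 2 * (norm x)\<^sup>2))"
    using fr_conv gr_sc assms by (intro convex_on_add convex_on_cmul)
  moreover have "(\<lambda>x. fr x + \<eta> * (gr x - \<mu> / 2 * (norm x)\<^sup>2)) = (\<lambda>x. FF \<eta> x - \<eta> * \<mu> / 2 * (norm x)\<^sup>2)"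
    by (simp add: FF_def fun_eq_iff algebra_simps)
  ultimately show ?thesis by simp
qed

lemma f_sg: assumes "y \<in> X" "w \<in> X" shows "fr y + inner (gf y) (w - y) \<le> fr w"
proof -
  have "ereal (fr y + inner (gf y) (w - y)) \<le> f w"
    using gf_sub[OF assms(1)] unfolding subdiff_def fr_def by blast
  then show ?thesis using f_fin[OF assms(2)] by simp
qed

lemma g_sg: assumes "y \<in> X" "w \<in> X" shows "gr y + inner (gg y) (w - y) \<le> gr w"
proof -
  have "ereal (gr y + inner (gg y) (w - y)) \<le> g w"
    using gg_sub[OF assms(1)] unfolding subdiff_def gr_def by blast
  then show ?thesis using g_fin[OF assms(2)] by simp
qed

lemma FF_sg: assumes "\<eta> \<ge> 0" "y \<in> X" "w \<in> X"
  shows "FF \<eta> y + inner (gf y + \<eta> *\<^sub>R gg y) (w - y) \<le> FF \<eta> w"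
proof -
  have "\<eta> * (gr y + inner (gg y) (w - y)) \<le> \<eta> * gr w"
    using mult_left_mono[OF g_sg[OF assms(2,3)] assms(1)] .
  then show ?thesis using f_sg[OF assms(2,3)] by (simp add: FF_def inner_add_left algebra_simps)
qed

lemma FF_cont: "continuous_on X (FF \<eta>)"
proof -
  let ?U = "interior (edom f \<inter> edom g)"
  have cU: "convex ?U" using f_convex g_strong unfolding econvex_def estrongly_convex_def
    by (intro convex_interior convex_Int) auto
  have "convex_on ?U fr" using f_convex cU interior_subset unfolding econvex_def fr_def
    by (blast intro: convex_on_subset)
  then have cf: "continuous_on ?U fr" by (intro convex_on_continuous) auto
  have "convex_on ?U (\<lambda>x. gr x - \<mu> / 2 * (norm x)\<^sup>2)" using g_strong cU interior_subset
    unfolding estrongly_convex_def gr_def by (blast intro: convex_on_subset)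
  then have "continuous_on ?U (\<lambda>x. gr x - \<mu> / 2 * (norm x)\<^sup>2)" by (intro convex_on_continuous) auto
  moreover have "continuous_on ?U (\<lambda>x. \<mu> / 2 * (norm x)\<^sup>2)" by (intro continuous_intros)
  ultimately have "continuous_on ?U (\<lambda>x. (gr x - \<mu> / 2 * (norm x)\<^sup>2) + \<mu> / 2 * (norm x)\<^sup>2)"
    by (rule continuous_on_add)
  then have cg: "continuous_on ?U gr" by simp
  have "continuous_on ?U (FF \<eta>)" unfolding FF_def[abs_def]
    by (intro continuous_on_add continuous_on_mult_left cf cg)
  then show ?thesis using X_int by (rule continuous_on_subset)
qed

lemma FF_min_exists: assumes eta: "\<eta> > 0" shows "\<exists>z\<in>X. \<forall>y\<in>X. FF \<eta> z \<le> FF \<eta> y"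
proof -
  define m where "m = \<eta> * \<mu>"
  have m: "m > 0" using eta mu_pos by (simp add: m_def)
  define s0 where "s0 = gf x0 + \<eta> *\<^sub>R gg x0"
  define R where "R = 2 * norm s0 / m"
  define K where "K = X \<inter> cball x0 R"
  have "compact K" unfolding K_def using X_closed by (intro closed_Int_compact compact_cball)
  moreover have "K \<noteq> {}" "x0 \<in> K" using x0_in m by (auto simp: K_def R_def)
  moreover have "continuous_on K (FF \<eta>)" using FF_cont by (rule continuous_on_subset) (simp add: K_def)
  ultimately obtain z where z: "z \<in> K" "\<And>y. y \<in> K \<Longrightarrow> FF \<eta> z \<le> FF \<eta> y"
    using continuous_attains_inf[of K "FF \<eta>"] by blast
  have "FF \<eta> z \<le> FF \<eta> y" if y: "y \<in> X" for y
  proof (cases "y \<in> K")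
    case True then show ?thesis by (rule z(2))
  next
    case False
    define r where "r = norm (y - x0)"
    have rR: "r > R" using False y unfolding K_def r_def by (simp add: dist_norm norm_minus_commute)
    have cs: "- (norm s0 * r) \<le> inner s0 (y - x0)"
      using Cauchy_Schwarz_ineq2[of s0 "y - x0"] unfolding r_def by linarith
    have sg: "FF \<eta> x0 + inner s0 (y - x0) + m / 2 * r\<^sup>2 \<le> FF \<eta> y"
      unfolding s0_def r_def m_def
      using sc_subgrad[OF FF_sc[of \<eta>] x0_in y, of "gf x0 + \<eta> *\<^sub>R gg x0"] FF_sg[of \<eta> x0] eta x0_in
      by (simp add: mult.assoc)
    have "m * R / 2 = norm s0" using m by (simp add: R_def)
    moreover have "m * R / 2 < m * r / 2" using rR m by simp
    ultimately have "norm s0 \<le> m * r / 2" by linarith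
    then have "norm s0 * r \<le> (m * r / 2) * r"
      by (rule mult_right_mono) (simp add: r_def)
    also have "\<dots> = m / 2 * r\<^sup>2" by (simp add: power2_eq_square)
    finally have "norm s0 * r \<le> m / 2 * r\<^sup>2" .
    then have "FF \<eta> x0 \<le> FF \<eta> y" using sg cs by linarith
    moreover have "FF \<eta> z \<le> FF \<eta> x0" using z(2) \<open>x0 \<in> K\<close> .
    ultimately show ?thesis by linarith
  qed
  then show ?thesis using z(1) unfolding K_def by blast
qed

lemma FF_min_unique:
  assumes eta: "\<eta> > 0" and z1: "z1 \<in> X" "\<forall>y\<in>X. FF \<eta> z1 \<le> FF \<eta> y"
    and z2: "z2 \<in> X" "\<forall>y\<in>X. FF \<eta> z2 \<le> FF \<eta> y"
  shows "z1 = z2"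
proof -
  have "\<eta> * \<mu> / 2 * (norm (z2 - z1))\<^sup>2 \<le> FF \<eta> z2 - FF \<eta> z1"
    using min_growth[OF FF_sc[of \<eta>] z1(1) z2(1)] z1(2) eta by auto
  moreover have "FF \<eta> z2 - FF \<eta> z1 \<le> 0" using z2 z1 by auto
  ultimately have le: "\<eta> * \<mu> / 2 * (norm (z2 - z1))\<^sup>2 \<le> 0" by linarith
  have p: "\<eta> * \<mu> / 2 > 0" using eta mu_pos by simp
  have "(norm (z2 - z1))\<^sup>2 \<le> 0"
  proof (rule ccontr)
    assume "\<not> (norm (z2 - z1))\<^sup>2 \<le> 0"
    then have "\<eta> * \<mu> / 2 * (norm (z2 - z1))\<^sup>2 > 0" using p by (intro mult_pos_pos) auto
    then show False using le by linarith
  qed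
  then show ?thesis by simp
qed

lemma xs_prop:
  assumes eta: "\<eta> > 0"
  shows "regmin f g X \<eta> \<in> X" and "\<And>y. y \<in> X \<Longrightarrow> FF \<eta> (regmin f g X \<eta>) \<le> FF \<eta> y"
proof -
  have e: "z \<in> X \<Longrightarrow> f z + ereal \<eta> * g z = ereal (FF \<eta> z)" for z
    using f_fin g_fin by (simp add: FF_def)
  have Q: "(z \<in> X \<and> (\<forall>y\<in>X. f z + ereal \<eta> * g z \<le> f y + ereal \<eta> * g y)) \<longleftrightarrow>
           (z \<in> X \<and> (\<forall>y\<in>X. FF \<eta> z \<le> FF \<eta> y))" for z
    using e by auto
  have ex1: "\<exists>!z. z \<in> X \<and> (\<forall>y\<in>X. f z + ereal \<eta> * g z \<le> f y + ereal \<eta> * g y)"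
    unfolding Q using FF_min_exists[OF eta] FF_min_unique[OF eta] by blast
  have "regmin f g X \<eta> \<in> X \<and> (\<forall>y\<in>X. FF \<eta> (regmin f g X \<eta>) \<le> FF \<eta> y)"
    using theI'[OF ex1] unfolding regmin_def Q .
  then show "regmin f g X \<eta> \<in> X" and "\<And>y. y \<in> X \<Longrightarrow> FF \<eta> (regmin f g X \<eta>) \<le> FF \<eta> y"
    by auto
qed

lemma xs_dist:
  assumes e2: "0 < \<eta>2" and e12: "\<eta>2 \<le> \<eta>1" and ggb: "\<And>y. y \<in> X \<Longrightarrow> norm (gg y) \<le> CG"
  shows "(norm (regmin f g X \<eta>1 - regmin f g X \<eta>2))\<^sup>2 \<le> CG\<^sup>2 / \<mu>\<^sup>2 * (\<eta>1 / \<eta>2 - 1)\<^sup>2"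
proof -
  define z where "z = regmin f g X \<eta>2"
  define z' where "z' = regmin f g X \<eta>1"
  have e1: "0 < \<eta>1" using e2 e12 by simp
  have zX: "z \<in> X" and zm: "\<And>y. y \<in> X \<Longrightarrow> FF \<eta>2 z \<le> FF \<eta>2 y" using xs_prop[OF e2] unfolding z_def by auto
  have z'X: "z' \<in> X" and z'm: "\<And>y. y \<in> X \<Longrightarrow> FF \<eta>1 z' \<le> FF \<eta>1 y" using xs_prop[OF e1] unfolding z'_def by auto
  define d where "d = norm (z' - z)"
  have d0: "d \<ge> 0" by (simp add: d_def)
  have A1: "\<eta>1 * \<mu> / 2 * d\<^sup>2 \<le> FF \<eta>1 z - FF \<eta>1 z'"
    using min_growth[OF FF_sc[of \<eta>1] z'X zX] z'm e1 unfolding d_def by (simp add: norm_minus_commute)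
  have A2: "\<eta>2 * \<mu> / 2 * d\<^sup>2 \<le> FF \<eta>2 z' - FF \<eta>2 z"
    using min_growth[OF FF_sc[of \<eta>2] zX z'X] zm e2 unfolding d_def by simp
  have sum: "FF \<eta>1 z - FF \<eta>1 z' + (FF \<eta>2 z' - FF \<eta>2 z) = (\<eta>1 - \<eta>2) * (gr z - gr z')"
    by (simp add: FF_def algebra_simps)
  have "gr z - gr z' \<le> inner (gg z) (z - z')"
    using g_sg[OF zX z'X] by (simp add: inner_diff_right)
  also have "\<dots> \<le> norm (gg z) * d"
    using Cauchy_Schwarz_ineq2[of "gg z" "z - z'"] unfolding d_def by (simp add: norm_minus_commute)
  also have "\<dots> \<le> CG * d" using ggb[OF zX] d0 by (rule mult_right_mono)
  finally have "(\<eta>1 - \<eta>2) * (gr z - gr z') \<le> (\<eta>1 - \<eta>2) * (CG * d)"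
    using e12 by (intro mult_left_mono) auto
  moreover have "\<eta>2 * \<mu> * d\<^sup>2 \<le> \<eta>1 * \<mu> / 2 * d\<^sup>2 + \<eta>2 * \<mu> / 2 * d\<^sup>2"
  proof -
    have "\<eta>2 * \<mu> * d\<^sup>2 = \<eta>2 * \<mu> / 2 * d\<^sup>2 + \<eta>2 * \<mu> / 2 * d\<^sup>2" by simp
    moreover have "\<eta>2 * \<mu> / 2 * d\<^sup>2 \<le> \<eta>1 * \<mu> / 2 * d\<^sup>2"
      using e12 mu_pos by (intro mult_right_mono) auto
    ultimately show ?thesis by linarith
  qed
  ultimately have key: "\<eta>2 * \<mu> * d\<^sup>2 \<le> (\<eta>1 - \<eta>2) * CG * d" using A1 A2 sum by (simp add: mult.assoc)
  have "d \<le> CG / \<mu> * (\<eta>1 / \<eta>2 - 1)"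
  proof (cases "d = 0")
    case True
    have "0 \<le> (\<eta>1 - \<eta>2) * CG * d" using key e2 mu_pos
      by (smt (verit) mult_nonneg_nonneg zero_le_power2)
    show ?thesis
    proof -
      have "CG \<ge> 0" using ggb[OF zX] norm_ge_zero order_trans by blast
      moreover have "\<eta>1 / \<eta>2 - 1 \<ge> 0" using e12 e2 by (simp add: field_simps)
      ultimately show ?thesis using True mu_pos by simp
    qed
  next
    case False
    then have dp: "d > 0" using d0 by simp
    have "\<eta>2 * \<mu> * d * d \<le> (\<eta>1 - \<eta>2) * CG * d" using key by (simp add: power2_eq_square mult.assoc)
    then have "\<eta>2 * \<mu> * d \<le> (\<eta>1 - \<eta>2) * CG" using dp by simp
    then have "d \<le> (\<eta>1 - \<eta>2) * CG / (\<eta>2 * \<mu>)" using e2 mu_pos by (simp add: field_simps)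
    also have "\<dots> = CG / \<mu> * (\<eta>1 / \<eta>2 - 1)" using e2 mu_pos by (simp add: field_simps)
    finally show ?thesis .
  qed
  then have "d\<^sup>2 \<le> (CG / \<mu> * (\<eta>1 / \<eta>2 - 1))\<^sup>2" using d0 by (rule power_mono)
  also have "\<dots> = CG\<^sup>2 / \<mu>\<^sup>2 * (\<eta>1 / \<eta>2 - 1)\<^sup>2" by (simp add: power_mult_distrib power_divide)
  finally show ?thesis unfolding d_def z_def z'_def .
qed

lemma step_block:
  "blockp blk j (rb_step blk Xs gf gg \<gamma> \<eta> i x) =
     (if j = i then closest_point (Xs i) (blockp blk i (x - \<gamma> *\<^sub>R (gf x + \<eta> *\<^sub>R gg x))) else blockp blk j x)"
proof -
  define cp where "cp = closest_point (Xs i) (blockp blk i (x - \<gamma> *\<^sub>R (gf x + \<eta> *\<^sub>R gg x)))"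
  have cpX: "cp \<in> Xs i" unfolding cp_def by (rule closest_point_in_set[OF Xs_closed Xs_ne])
  then have cpb: "blockp blk i cp = cp" using Xs_block by blast
  have "blockp blk j (rb_step blk Xs gf gg \<gamma> \<eta> i x) = blockp blk j x - blockp blk j (blockp blk i x) + blockp blk j cp"
    unfolding rb_step_def cp_def[symmetric] by (simp add: blockp_add blockp_diff)
  also have "\<dots> = (if j = i then cp else blockp blk j x)"
  proof (cases "j = i")
    case True then show ?thesis by (simp add: blockp_idem cpb)
  next
    case False
    have "blockp blk j cp = 0" using blockp_other[of i j blk cp] False cpb by simp
    then show ?thesis using False blockp_other[of i j blk x] by simp
  qed
  finally show ?thesis unfolding cp_def .
qed

lemma step_X: assumes "x \<in> X" shows "rb_step blk Xs gf gg \<gamma> \<eta> i x \<in> X"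
  using assms closest_point_in_set[OF Xs_closed Xs_ne]
  unfolding prodset_def by (auto simp: step_block)

lemma H_bound1:
  fixes p :: "'b \<Rightarrow> real"
  assumes pp: "\<And>i. p i > 0" and ps: "(\<Sum>i\<in>UNIV. p i) = 1" and x: "x \<in> X" and z: "z \<in> X"
  shows "(\<Sum>i\<in>UNIV. p i * Lfun blk p (rb_step blk Xs gf gg \<gamma> \<eta> i x) z)
         \<le> Lfun blk p x z + (norm (x - \<gamma> *\<^sub>R (gf x + \<eta> *\<^sub>R gg x) - z))\<^sup>2 - (norm (x - z))\<^sup>2"
proof -
  define u where "u = x - \<gamma> *\<^sub>R (gf x + \<eta> *\<^sub>R gg x)"
  define cp where "cp i = closest_point (Xs i) (blockp blk i u)" for i
  define n where "n i = (norm (blockp blk i (x - z)))\<^sup>2" for i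
  define n' where "n' i = (norm (cp i - blockp blk i z))\<^sup>2" for i
  have L: "Lfun blk p (rb_step blk Xs gf gg \<gamma> \<eta> i x) z = Lfun blk p x z + (1 / p i) * (n' i - n i)" for i
  proof -
    have "Lfun blk p (rb_step blk Xs gf gg \<gamma> \<eta> i x) z =
          (\<Sum>j\<in>UNIV. (1 / p j) * n j + (if j = i then (1 / p i) * (n' i - n i) else 0))"
      unfolding Lfun_def
      by (intro sum.cong refl) (auto simp: blockp_diff step_block n_def n'_def cp_def u_def algebra_simps)
    also have "\<dots> = Lfun blk p x z + (1 / p i) * (n' i - n i)"
      by (simp add: sum.distrib Lfun_def n_def)
    finally show ?thesis .
  qed
  have n'le: "n' i \<le> (norm (blockp blk i (u - z)))\<^sup>2" for i
  proof -
    have bz: "blockp blk i z \<in> Xs i" using z by (simp add: prodset_def)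
    have "dist (cp i) (closest_point (Xs i) (blockp blk i z)) \<le> dist (blockp blk i u) (blockp blk i z)"
      unfolding cp_def by (rule closest_point_lipschitz[OF Xs_convex Xs_closed Xs_ne])
    then have "norm (cp i - blockp blk i z) \<le> norm (blockp blk i (u - z))"
      using closest_point_self[OF bz] by (simp add: dist_norm blockp_diff)
    then show ?thesis unfolding n'_def by (intro power_mono) auto
  qed
  have "(\<Sum>i\<in>UNIV. p i * Lfun blk p (rb_step blk Xs gf gg \<gamma> \<eta> i x) z)
        = (\<Sum>i\<in>UNIV. p i * Lfun blk p x z + (n' i - n i))"
    unfolding L using pp by (intro sum.cong refl) (simp add: algebra_simps less_imp_neq[symmetric])
  also have "\<dots> = Lfun blk p x z + (\<Sum>i\<in>UNIV. n' i) - (\<Sum>i\<in>UNIV. n i)"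
    by (simp add: sum.distrib sum_subtractf sum_distrib_right[symmetric] ps)
  also have "\<dots> \<le> Lfun blk p x z + (\<Sum>i\<in>UNIV. (norm (blockp blk i (u - z)))\<^sup>2) - (\<Sum>i\<in>UNIV. n i)"
    using sum_mono[of UNIV n' "\<lambda>i. (norm (blockp blk i (u - z)))\<^sup>2", OF n'le] by simp
  also have "\<dots> = Lfun blk p x z + (norm (u - z))\<^sup>2 - (norm (x - z))\<^sup>2"
    unfolding n_def by (simp add: norm_blocks[symmetric])
  finally show ?thesis unfolding u_def .
qed

lemma sq_bound:
  fixes C :: "'b \<Rightarrow> real" and h :: "real^'c \<Rightarrow> real^'c"
  assumes "\<And>i. norm (blockp blk i w) \<le> C i"
  shows "(norm w)\<^sup>2 \<le> (sqrt (\<Sum>i\<in>UNIV. (C i)\<^sup>2))\<^sup>2"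
proof -
  have "(norm w)\<^sup>2 = (\<Sum>i\<in>UNIV. (norm (blockp blk i w))\<^sup>2)" by (rule norm_blocks)
  also have "\<dots> \<le> (\<Sum>i\<in>UNIV. (C i)\<^sup>2)"
    using assms by (intro sum_mono power_mono) auto
  also have "\<dots> = (sqrt (\<Sum>i\<in>UNIV. (C i)\<^sup>2))\<^sup>2" by (simp add: sum_nonneg)
  finally show ?thesis .
qed

lemma step_main:
  fixes p Cf Cg :: "'b \<Rightarrow> real"
  assumes pp: "\<And>i. p i > 0" and ps: "(\<Sum>i\<in>UNIV. p i) = 1" and pm: "\<And>i. pmin \<le> p i" and p0: "pmin > 0"
    and x: "x \<in> X" and gam: "\<gamma> > 0" and eta: "\<eta> > 0" and e1: "\<eta> \<le> \<eta>1" and e0: "\<eta> \<le> \<eta>0"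
    and Cfb: "\<And>y i. y \<in> X \<Longrightarrow> norm (blockp blk i (gf y)) \<le> Cf i"
    and Cgb: "\<And>y i. y \<in> X \<Longrightarrow> norm (blockp blk i (gg y)) \<le> Cg i"
    and CF: "CF = sqrt (\<Sum>i\<in>UNIV. (Cf i)\<^sup>2)" and CG: "CG = sqrt (\<Sum>i\<in>UNIV. (Cg i)\<^sup>2)"
    and cle: "\<mu> * \<gamma> * \<eta> * pmin \<le> 1"
  shows "(\<Sum>i\<in>UNIV. p i * Lfun blk p (rb_step blk Xs gf gg \<gamma> \<eta> i x) (regmin f g X \<eta>))
     \<le> (1 - \<mu> * \<gamma> * \<eta> * pmin) * Lfun blk p x (regmin f g X \<eta>1)
        + 2 * CG\<^sup>2 / (pmin\<^sup>2 * \<mu> ^ 3 * \<gamma> * \<eta>) * (\<eta>1 / \<eta> - 1)\<^sup>2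
        + 2 * \<gamma>\<^sup>2 * (CF\<^sup>2 + \<eta>0\<^sup>2 * CG\<^sup>2)"
proof -
  define z where "z = regmin f g X \<eta>"
  define z' where "z' = regmin f g X \<eta>1"
  define v where "v = gf x + \<eta> *\<^sub>R gg x"
  define D where "D = (norm (x - z))\<^sup>2"
  define Lz where "Lz = Lfun blk p x z"
  define L1 where "L1 = Lfun blk p x z'"
  define Bz where "Bz = Lfun blk p z' z"
  define c where "c = \<mu> * \<gamma> * \<eta> * pmin"
  define K where "K = 2 * \<gamma>\<^sup>2 * (CF\<^sup>2 + \<eta>0\<^sup>2 * CG\<^sup>2)"
  define E where "E = 2 * CG\<^sup>2 / (pmin\<^sup>2 * \<mu> ^ 3 * \<gamma> * \<eta>) * (\<eta>1 / \<eta> - 1)\<^sup>2"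
  define H where "H = (\<Sum>i\<in>UNIV. p i * Lfun blk p (rb_step blk Xs gf gg \<gamma> \<eta> i x) z)"
  have e1p: "\<eta>1 > 0" using eta e1 by simp
  have zX: "z \<in> X" and zm: "\<And>y. y \<in> X \<Longrightarrow> FF \<eta> z \<le> FF \<eta> y" using xs_prop[OF eta] unfolding z_def by auto
  have z'X: "z' \<in> X" using xs_prop[OF e1p] unfolding z'_def by auto
  have c0: "c > 0" using mu_pos gam eta p0 by (simp add: c_def)
  have c1: "c \<le> 1" using cle by (simp add: c_def)
  have Lz0: "Lz \<ge> 0" "L1 \<ge> 0" "Bz \<ge> 0" unfolding Lz_def L1_def Bz_def using pp by (simp_all add: Lfun_nonneg)
  have S1: "H \<le> Lz + (norm (x - \<gamma> *\<^sub>R v - z))\<^sup>2 - D"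
    unfolding H_def Lz_def D_def v_def by (rule H_bound1[OF pp ps x zX])
  have S2: "(norm (x - \<gamma> *\<^sub>R v - z))\<^sup>2 = D - 2 * \<gamma> * inner v (x - z) + \<gamma>\<^sup>2 * (norm v)\<^sup>2"
  proof -
    have e: "x - \<gamma> *\<^sub>R v - z = (x - z) - \<gamma> *\<^sub>R v" by (simp add: algebra_simps)
    have "(norm (w - \<gamma> *\<^sub>R v))\<^sup>2 = (norm w)\<^sup>2 - 2 * \<gamma> * inner v w + \<gamma>\<^sup>2 * (norm v)\<^sup>2" for w
      unfolding power2_norm_eq_inner
      by (simp add: inner_diff_left inner_diff_right inner_commute) (simp add: power2_eq_square algebra_simps)
    then show ?thesis unfolding D_def e .
  qed
  have S3: "\<eta> * \<mu> * D \<le> inner v (x - z)"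
  proof -
    have a: "FF \<eta> x + inner v (z - x) + \<eta> * \<mu> / 2 * (norm (z - x))\<^sup>2 \<le> FF \<eta> z"
      using sc_subgrad[OF FF_sc[of \<eta>] x zX, of v] FF_sg[of \<eta> x] eta x unfolding v_def by simp
    have b: "\<eta> * \<mu> / 2 * (norm (x - z))\<^sup>2 \<le> FF \<eta> x - FF \<eta> z"
      using min_growth[OF FF_sc[of \<eta>] zX x] zm eta by simp
    have "inner v (z - x) = - inner v (x - z)" by (simp add: inner_diff_right)
    then show ?thesis using a b unfolding D_def by (simp add: norm_minus_commute)
  qed
  have S4: "(norm v)\<^sup>2 \<le> 2 * (CF\<^sup>2 + \<eta>0\<^sup>2 * CG\<^sup>2)"
  proof -
    have f: "(norm (gf x))\<^sup>2 \<le> CF\<^sup>2" unfolding CF by (rule sq_bound) (rule Cfb[OF x])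
    have g: "(norm (gg x))\<^sup>2 \<le> CG\<^sup>2" unfolding CG by (rule sq_bound) (rule Cgb[OF x])
    have ee: "\<eta>\<^sup>2 \<le> \<eta>0\<^sup>2" using eta e0 by (intro power_mono) auto
    have "(norm (\<eta> *\<^sub>R gg x))\<^sup>2 = \<eta>\<^sup>2 * (norm (gg x))\<^sup>2" using eta by (simp add: power_mult_distrib)
    also have "\<dots> \<le> \<eta>0\<^sup>2 * CG\<^sup>2" using ee g by (intro mult_mono) auto
    finally have g2: "(norm (\<eta> *\<^sub>R gg x))\<^sup>2 \<le> \<eta>0\<^sup>2 * CG\<^sup>2" .
    have "(norm v)\<^sup>2 \<le> (1 + 1) * (norm (gf x))\<^sup>2 + (1 + 1 / 1) * (norm (\<eta> *\<^sub>R gg x))\<^sup>2"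
      unfolding v_def by (rule young) simp
    then show ?thesis using f g2 by simp
  qed
  have S5: "pmin * Lz \<le> D" unfolding Lz_def D_def by (rule Lfun_lower[OF pp pm p0])
  have H1: "H \<le> (1 - 2 * c) * Lz + K"
  proof -
    have "H \<le> Lz - 2 * \<gamma> * inner v (x - z) + \<gamma>\<^sup>2 * (norm v)\<^sup>2" using S1 S2 by simp
    moreover have "2 * \<gamma> * (\<eta> * \<mu> * D) \<le> 2 * \<gamma> * inner v (x - z)" using S3 gam by simp
    moreover have "\<gamma>\<^sup>2 * (norm v)\<^sup>2 \<le> \<gamma>\<^sup>2 * (2 * (CF\<^sup>2 + \<eta>0\<^sup>2 * CG\<^sup>2))" using S4 by (rule mult_left_mono) simp
    moreover have "2 * \<gamma> * (\<eta> * \<mu> * (pmin * Lz)) \<le> 2 * \<gamma> * (\<eta> * \<mu> * D)"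
      using S5 gam eta mu_pos by (intro mult_left_mono) auto
    moreover have "2 * \<gamma> * (\<eta> * \<mu> * (pmin * Lz)) = 2 * c * Lz" by (simp add: c_def algebra_simps)
    moreover have "\<gamma>\<^sup>2 * (2 * (CF\<^sup>2 + \<eta>0\<^sup>2 * CG\<^sup>2)) = K" by (simp add: K_def)
    moreover have "(1 - 2 * c) * Lz = Lz - 2 * c * Lz" by (simp add: algebra_simps)
    ultimately show ?thesis by linarith
  qed
  have ggb: "norm (gg y) \<le> CG" if "y \<in> X" for y
  proof -
    have "(norm (gg y))\<^sup>2 \<le> CG\<^sup>2" unfolding CG by (rule sq_bound) (rule Cgb[OF that])
    then show ?thesis by (rule power2_le_imp_le) (simp add: CG sum_nonneg)
  qed
  have dz: "(norm (z' - z))\<^sup>2 \<le> CG\<^sup>2 / \<mu>\<^sup>2 * (\<eta>1 / \<eta> - 1)\<^sup>2"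
    unfolding z_def z'_def by (rule xs_dist[OF eta e1 ggb])
  have E0: "E \<ge> 0" unfolding E_def using p0 mu_pos gam eta by simp
  have BE: "Bz / c \<le> E"
  proof -
    have "pmin * Bz \<le> (norm (z' - z))\<^sup>2" unfolding Bz_def by (rule Lfun_lower[OF pp pm p0])
    define Q where "Q = CG\<^sup>2 / \<mu>\<^sup>2 * (\<eta>1 / \<eta> - 1)\<^sup>2"
    have "pmin * Bz \<le> Q" using dz \<open>pmin * Bz \<le> _\<close> unfolding Q_def by linarith
    then have "Bz \<le> Q / pmin" using p0 by (subst pos_le_divide_eq[OF p0]) (simp add: mult.commute)
    then have "Bz / c \<le> Q / pmin / c" using c0 by (intro divide_right_mono) auto
    also have "\<dots> = CG\<^sup>2 / (pmin\<^sup>2 * \<mu> ^ 3 * \<gamma> * \<eta>) * (\<eta>1 / \<eta> - 1)\<^sup>2"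
      using p0 mu_pos gam eta unfolding Q_def by (simp add: c_def field_simps power2_eq_square power3_eq_cube)
    also have "\<dots> \<le> E" unfolding E_def using p0 mu_pos gam eta by (simp add: field_simps)
    finally show ?thesis .
  qed
  have "(1 - 2 * c) * Lz \<le> (1 - c) * L1 + E"
  proof (cases "1 - 2 * c \<le> 0")
    case True
    then have "(1 - 2 * c) * Lz \<le> 0" using Lz0 by (simp add: mult_nonpos_nonneg)
    moreover have "0 \<le> (1 - c) * L1" using c1 Lz0 by simp
    ultimately show ?thesis using E0 by linarith
  next
    case False
    have "Lz \<le> (1 + c) * L1 + (1 + 1 / c) * Bz"
      unfolding Lz_def L1_def Bz_def by (rule Lfun_tri[OF pp c0])
    then have "(1 - 2 * c) * Lz \<le> (1 - 2 * c) * ((1 + c) * L1 + (1 + 1 / c) * Bz)"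
      using False by (intro mult_left_mono) auto
    also have "\<dots> = ((1 - 2 * c) * (1 + c)) * L1 + ((1 - 2 * c) * (1 + c)) * (Bz / c)"
      using c0 by (simp add: field_simps)
    also have "\<dots> \<le> (1 - c) * L1 + 1 * (Bz / c)"
    proof (intro add_mono mult_right_mono)
      show "(1 - 2 * c) * (1 + c) \<le> 1 - c" using c0 by (simp add: algebra_simps)
      show "(1 - 2 * c) * (1 + c) \<le> 1" using c0 by (simp add: algebra_simps)
      show "0 \<le> Bz / c" using Lz0 c0 by simp
    qed (use Lz0 in simp)
    finally show ?thesis using BE by simp
  qed
  then have "H \<le> (1 - c) * L1 + E + K" using H1 by linarith
  then show ?thesis unfolding H_def c_def L1_def E_def K_def z_def z'_def .
qed

end


theorem lemma4:
  fixes blk :: "'c::finite \<Rightarrow> 'b::finite"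
    and Xs :: "'b \<Rightarrow> (real^'c) set"
    and f g :: "real^'c \<Rightarrow> ereal"
    and gf gg :: "real^'c \<Rightarrow> real^'c"
    and Cf Cg :: "'b \<Rightarrow> real"
    and P :: "'b pmf"
    and \<mu> :: real
    and gam eta :: "nat \<Rightarrow> real"
    and x0 :: "real^'c"
    and k :: nat
  defines "X \<equiv> prodset blk Xs"
    and "p \<equiv> (\<lambda>i. pmf P i)"
    and "pmin \<equiv> Min (range (\<lambda>i. pmf P i))"
    and "CF \<equiv> sqrt (\<Sum>i\<in>UNIV. (Cf i)\<^sup>2)"
    and "CG \<equiv> sqrt (\<Sum>i\<in>UNIV. (Cg i)\<^sup>2)"
    and "xs \<equiv> regmin f g (prodset blk Xs)"
    and "x \<equiv> rb_iter blk Xs gf gg gam eta x0"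
  assumes Xs_block: "\<And>i. Xs i \<subseteq> {y. blockp blk i y = y}"
    and Xs_ne: "\<And>i. Xs i \<noteq> {}"
    and Xs_closed: "\<And>i. closed (Xs i)"
    and Xs_convex: "\<And>i. convex (Xs i)"
    and f_proper: "proper_fun f" and f_convex: "econvex f"
    and g_proper: "proper_fun g" and g_convex: "econvex g"
    and mu_pos: "\<mu> > 0" and g_strong: "estrongly_convex \<mu> g"
    and X_int: "X \<subseteq> interior (edom f \<inter> edom g)"
    and gf_sub: "\<And>y. y \<in> X \<Longrightarrow> gf y \<in> subdiff f y"
    and gg_sub: "\<And>y. y \<in> X \<Longrightarrow> gg y \<in> subdiff g y"
    and Cf_bound: "\<And>y i. y \<in> X \<Longrightarrow> norm (blockp blk i (gf y)) \<le> Cf i"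
    and Cg_bound: "\<And>y i. y \<in> X \<Longrightarrow> norm (blockp blk i (gg y)) \<le> Cg i"
    and p_pos: "\<And>i. pmf P i > 0"
    and x0_in: "x0 \<in> X"
    and gam_pos: "\<And>j. gam j > 0" and gam_noninc: "\<And>j. gam (Suc j) \<le> gam j"
    and eta_pos: "\<And>j. eta j > 0" and eta_noninc: "\<And>j. eta (Suc j) \<le> eta j"
    and step0: "gam 0 * eta 0 < 1 / (\<mu> * pmin)"
    and k_ge: "k \<ge> 1"
  shows "AE \<omega> in idx_space P.
           real_cond_exp (idx_space P) (idx_filt P k)
              (\<lambda>\<omega>. Lfun blk p (x \<omega> (Suc k)) (xs (eta k))) \<omega>
         \<le> (1 - \<mu> * gam k * eta k * pmin) * Lfun blk p (x \<omega> k) (xs (eta (k - 1)))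
           + 2 * CG\<^sup>2 / (pmin\<^sup>2 * \<mu> ^ 3 * gam k * eta k) * (eta (k - 1) / eta k - 1)\<^sup>2
           + 2 * (gam k)\<^sup>2 * (CF\<^sup>2 + (eta 0)\<^sup>2 * CG\<^sup>2)"
proof -
  have Xd: "X = prodset blk Xs" using \<open>X \<equiv> prodset blk Xs\<close> by simp
  have pd: "p = (\<lambda>i. pmf P i)" using \<open>p \<equiv> (\<lambda>i. pmf P i)\<close> by simp
  have pmd: "pmin = Min (range (\<lambda>i. pmf P i))" using \<open>pmin \<equiv> Min (range (\<lambda>i. pmf P i))\<close> by simp
  have CFd: "CF = sqrt (\<Sum>i\<in>UNIV. (Cf i)\<^sup>2)" using \<open>CF \<equiv> sqrt (\<Sum>i\<in>UNIV. (Cf i)\<^sup>2)\<close> by simp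
  have CGd: "CG = sqrt (\<Sum>i\<in>UNIV. (Cg i)\<^sup>2)" using \<open>CG \<equiv> sqrt (\<Sum>i\<in>UNIV. (Cg i)\<^sup>2)\<close> by simp
  have xsd: "xs = regmin f g (prodset blk Xs)" using \<open>xs \<equiv> regmin f g (prodset blk Xs)\<close> by simp
  have xd: "x = rb_iter blk Xs gf gg gam eta x0" using \<open>x \<equiv> rb_iter blk Xs gf gg gam eta x0\<close> by simp
  interpret R: rbs blk Xs f g gf gg \<mu> x0
    by unfold_locales (use Xs_block Xs_ne Xs_closed Xs_convex f_proper f_convex g_proper mu_pos g_strong
        X_int gf_sub gg_sub x0_in Xd in auto)
  have pp: "\<And>i. p i > 0" using p_pos pd by simp
  have ps: "(\<Sum>i\<in>UNIV. p i) = 1" unfolding pd by (rule sum_pmf_eq_1) auto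
  have fin: "finite (range (\<lambda>i. pmf P i))" by simp
  have pm: "\<And>i. pmin \<le> p i" unfolding pmd pd using fin by (intro Min_le) auto
  have p0: "pmin > 0"
  proof -
    have "pmin \<in> range (\<lambda>i. pmf P i)" unfolding pmd using fin by (intro Min_in) auto
    then show ?thesis using p_pos by auto
  qed
  have etadec: "eta j \<le> eta i" if "i \<le> j" for i j
    using that by (induction j) (auto intro: order_trans[OF eta_noninc] simp: le_Suc_eq)
  have gamdec: "gam j \<le> gam i" if "i \<le> j" for i j
    using that by (induction j) (auto intro: order_trans[OF gam_noninc] simp: le_Suc_eq)
  have e1: "eta k \<le> eta (k - 1)" by (rule etadec) simp
  have e0: "eta k \<le> eta 0" by (rule etadec) simp
  have g0: "gam k \<le> gam 0" by (rule gamdec) simp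
  have cle: "\<mu> * gam k * eta k * pmin \<le> 1"
  proof -
    have "\<mu> * pmin > 0" using mu_pos p0 by simp
    then have "gam 0 * eta 0 * (\<mu> * pmin) < 1" using step0 by (simp add: pos_less_divide_eq)
    moreover have "gam k * eta k \<le> gam 0 * eta 0"
      using g0 e0 gam_pos eta_pos by (intro mult_mono) (auto simp: less_imp_le)
    then have "gam k * eta k * (\<mu> * pmin) \<le> gam 0 * eta 0 * (\<mu> * pmin)"
      using \<open>\<mu> * pmin > 0\<close> by (intro mult_right_mono) auto
    ultimately show ?thesis by (simp add: algebra_simps)
  qed
  have dep: "rb_iter blk Xs gf gg gam eta x0 \<omega> n = rb_iter blk Xs gf gg gam eta x0 \<omega>' n"
    if "\<And>j. j < n \<Longrightarrow> \<omega> j = \<omega>' j" for \<omega> \<omega>' n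
    using that by (induction n) auto
  have xX: "x \<omega> n \<in> prodset blk Xs" for \<omega> n
    unfolding xd by (induction n) (simp_all add: x0_in[unfolded Xd] R.step_X)
  define W where "W \<omega> = Lfun blk p (x \<omega> (Suc k)) (xs (eta k))" for \<omega>
  have Wdep: "W \<omega> = W \<omega>'" if "\<And>j. j < Suc k \<Longrightarrow> \<omega> j = \<omega>' j" for \<omega> \<omega>'
  proof -
    have "rb_iter blk Xs gf gg gam eta x0 \<omega> (Suc k) = rb_iter blk Xs gf gg gam eta x0 \<omega>' (Suc k)"
      by (rule dep) (rule that)
    then show ?thesis unfolding W_def xd by simp
  qed
  have ae: "AE \<omega> in idx_space P. real_cond_exp (idx_space P) (idx_filt P k) W \<omega> = (\<Sum>i\<in>UNIV. pmf P i * W (fun_upd \<omega> k i))"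
    by (rule cond_exp_step) (rule Wdep)
  have bound: "(\<Sum>i\<in>UNIV. pmf P i * W (fun_upd \<omega> k i))
         \<le> (1 - \<mu> * gam k * eta k * pmin) * Lfun blk p (x \<omega> k) (xs (eta (k - 1)))
           + 2 * CG\<^sup>2 / (pmin\<^sup>2 * \<mu> ^ 3 * gam k * eta k) * (eta (k - 1) / eta k - 1)\<^sup>2
           + 2 * (gam k)\<^sup>2 * (CF\<^sup>2 + (eta 0)\<^sup>2 * CG\<^sup>2)" for \<omega>
  proof -
    have xk: "x (fun_upd \<omega> k i) k = x \<omega> k" for i unfolding xd by (rule dep) simp
    have Wi: "W (fun_upd \<omega> k i) = Lfun blk p (rb_step blk Xs gf gg (gam k) (eta k) i (x \<omega> k)) (xs (eta k))" for i
      unfolding W_def using xk[of i] by (simp add: xd)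
    show ?thesis unfolding Wi pd[symmetric] xsd
      by (rule R.step_main[OF pp ps pm p0 xX gam_pos eta_pos e1 e0 _ _ CFd CGd cle])
         (use Cf_bound Cg_bound Xd in auto)
  qed
  show ?thesis using ae unfolding W_def[abs_def]
    by (rule eventually_mono) (use bound[unfolded W_def] in simp)
qed

end
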